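(* Let $D=(V,A)$ be a digraph with minimum in-degree at least 1, and let $\mathcal{L}D=\mathcal{L}_{(A',\phi)}D$ be a partial line digraph of $D$. Then the number of semikernels of $D$ is less than or equal to the number of semikernels of $\mathcal{L}D$; more precisely, the map $K\mapsto\omega^-(K)\cap A'$ sends semikernels of $D$ injectively to semikernels of $\mathcal{L}D$.
   Context: Digraphs are loopless and without multiple arcs. For $U\subseteq V$, $\omega^-(U)=\{(x,y)\in A: y\in U,\ x\notin U\}$ and $\omega^+(U)=\{(x,y)\in A: x\in U,\ y\notin U\}$; for a vertex $j$, $\omega^-(j)$ is the set of arcs with terminal vertex $j$. For a set of arcs $\Omega$, $H(\Omega)=\{y:(x,y)\in\Omega\}$. The arc $(x,y)$ is also written $xy$. Partial line digraph: given $D=(V,A)$ with minimum in-degree at least 1, take an arc subset $A'\subseteq A$ and a surjective map $\phi:A\to A'$ such that (i) $H(A')=V$; (ii) $\phi$ restricted to $A'$ is the identity, and for every vertex $j\in V$, $\phi(\omega^-(j))\subseteq\omega^-(j)\cap A'$. The partial line digraph $\mathcal{L}_{(A',\phi)}D$ has vertex set $A'$ and arc set $\{(ij,\phi(j,k)) : ij\in A',\ (j,k)\in A\}$. A semikernel of a digraph is an independent vertex set $S$ (no arc joins two vertices of $S$) such that for every arc $(s,x)\in\omega^+(S)$ there is an arc $(x,s')\in\omega^-(S)$. *)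

theory Defs
  imports Main
begin

text \<open>A digraph is a finite vertex set V with an arc set A of ordered pairs
  (no multiple arcs by construction) that is loopless.\<close>
definition digraph :: "'a set \<Rightarrow> ('a \<times> 'a) set \<Rightarrow> bool" where
  "digraph V A \<longleftrightarrow> finite V \<and> A \<subseteq> V \<times> V \<and> (\<forall>(x,y)\<in>A. x \<noteq> y)"

definition min_indeg_ge1 :: "'a set \<Rightarrow> ('a \<times> 'a) set \<Rightarrow> bool" where
  "min_indeg_ge1 V A \<longleftrightarrow> (\<forall>j\<in>V. \<exists>x. (x, j) \<in> A)"

definition in_cut :: "('a \<times> 'a) set \<Rightarrow> 'a set \<Rightarrow> ('a \<times> 'a) set" where
  "in_cut A U = {(x,y) \<in> A. y \<in> U \<and> x \<notin> U}"

definition out_cut :: "('a \<times> 'a) set \<Rightarrow> 'a set \<Rightarrow> ('a \<times> 'a) set" where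
  "out_cut A U = {(x,y) \<in> A. x \<in> U \<and> y \<notin> U}"

definition in_arcs :: "('a \<times> 'a) set \<Rightarrow> 'a \<Rightarrow> ('a \<times> 'a) set" where
  "in_arcs A j = {(x,y) \<in> A. y = j}"

definition heads :: "('a \<times> 'a) set \<Rightarrow> 'a set" where
  "heads \<Omega> = {y. \<exists>x. (x,y) \<in> \<Omega>}"

definition is_pld :: "'a set \<Rightarrow> ('a \<times> 'a) set \<Rightarrow> ('a \<times> 'a) set
    \<Rightarrow> (('a \<times> 'a) \<Rightarrow> ('a \<times> 'a)) \<Rightarrow> bool" where
  "is_pld V A A' \<phi> \<longleftrightarrow> A' \<subseteq> A \<and> \<phi> ` A = A' \<and> heads A' = V
     \<and> (\<forall>a\<in>A'. \<phi> a = a)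
     \<and> (\<forall>j\<in>V. \<phi> ` in_arcs A j \<subseteq> in_arcs A j \<inter> A')"

text \<open>Arc set of the partial line digraph (its vertex set is A').\<close>
definition pld_arcs :: "('a \<times> 'a) set \<Rightarrow> ('a \<times> 'a) set
    \<Rightarrow> (('a \<times> 'a) \<Rightarrow> ('a \<times> 'a)) \<Rightarrow> (('a \<times> 'a) \<times> ('a \<times> 'a)) set" where
  "pld_arcs A A' \<phi> = {((i,j), \<phi> (j,k)) | i j k. (i,j) \<in> A' \<and> (j,k) \<in> A}"

definition independent :: "'a set \<Rightarrow> ('a \<times> 'a) set \<Rightarrow> 'a set \<Rightarrow> bool" where
  "independent V A S \<longleftrightarrow> S \<subseteq> V \<and> (\<forall>x\<in>S. \<forall>y\<in>S. (x,y) \<notin> A)"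

definition semikernel :: "'a set \<Rightarrow> ('a \<times> 'a) set \<Rightarrow> 'a set \<Rightarrow> bool" where
  "semikernel V A S \<longleftrightarrow> independent V A S \<and>
     (\<forall>(s,x) \<in> out_cut A S. \<exists>s'. (x, s') \<in> in_cut A S)"

end

theory Submission
  imports Defs
begin

lemma sk_in_cut:
  assumes "semikernel V A K" "A' \<subseteq> A"
  shows "in_cut A K \<inter> A' = {(x,y)\<in>A'. y \<in> K}"
  using assms unfolding semikernel_def independent_def in_cut_def by auto

theorem theorem2p6:
  fixes V :: "'a set" and A A' :: "('a \<times> 'a) set"
    and \<phi> :: "('a \<times> 'a) \<Rightarrow> ('a \<times> 'a)"
  assumes "digraph V A" and "min_indeg_ge1 V A" and "is_pld V A A' \<phi>"
  shows "(\<forall>K. semikernel V A K \<longrightarrow> semikernel A' (pld_arcs A A' \<phi>) (in_cut A K \<inter> A'))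
       \<and> inj_on (\<lambda>K. in_cut A K \<inter> A') {K. semikernel V A K}
       \<and> card {K. semikernel V A K} \<le> card {S. semikernel A' (pld_arcs A A' \<phi>) S}"
proof -
  have AV: "A \<subseteq> V \<times> V" and fV: "finite V" using assms(1) unfolding digraph_def by auto
  have A'A: "A' \<subseteq> A" and hd: "heads A' = V" and phiA: "\<And>a. a \<in> A \<Longrightarrow> \<phi> a \<in> A'"
    and phin: "\<And>j k. (j,k) \<in> A \<Longrightarrow> \<phi> (j,k) \<in> A' \<and> snd (\<phi> (j,k)) = k"
  proof -
    show "A' \<subseteq> A" "heads A' = V" using assms(3) unfolding is_pld_def by auto
    show "\<And>a. a \<in> A \<Longrightarrow> \<phi> a \<in> A'" using assms(3) unfolding is_pld_def by auto
    fix j k assume jk: "(j,k) \<in> A"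
    then have "k \<in> V" using AV by auto
    then have "\<phi> ` in_arcs A k \<subseteq> in_arcs A k \<inter> A'" using assms(3) unfolding is_pld_def by auto
    moreover have "(j,k) \<in> in_arcs A k" using jk unfolding in_arcs_def by auto
    ultimately have "\<phi> (j,k) \<in> in_arcs A k \<inter> A'" by blast
    then show "\<phi> (j,k) \<in> A' \<and> snd (\<phi> (j,k)) = k" unfolding in_arcs_def by auto
  qed
  have P1: "semikernel A' (pld_arcs A A' \<phi>) (in_cut A K \<inter> A')" if sk: "semikernel V A K" for K
  proof -
    have S: "in_cut A K \<inter> A' = {(x,y)\<in>A'. y \<in> K}" using sk_in_cut[OF sk A'A] .
    have ind: "\<And>x y. x \<in> K \<Longrightarrow> y \<in> K \<Longrightarrow> (x,y) \<notin> A"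
      using sk unfolding semikernel_def independent_def by auto
    have abs: "\<And>s x. (s,x) \<in> A \<Longrightarrow> s \<in> K \<Longrightarrow> x \<notin> K \<Longrightarrow> \<exists>s'. (x,s') \<in> A \<and> s' \<in> K"
      using sk unfolding semikernel_def out_cut_def in_cut_def by fastforce
    show ?thesis unfolding semikernel_def independent_def S
    proof (intro conjI ballI)
      show "{(x, y). (x, y) \<in> A' \<and> y \<in> K} \<subseteq> A'" by auto
    next
      fix a b assume a: "a \<in> {(x, y). (x, y) \<in> A' \<and> y \<in> K}" and b: "b \<in> {(x, y). (x, y) \<in> A' \<and> y \<in> K}"
      show "(a,b) \<notin> pld_arcs A A' \<phi>"
      proof
        assume "(a,b) \<in> pld_arcs A A' \<phi>"
        then obtain i j k where e: "a = (i,j)" "b = \<phi> (j,k)" "(j,k) \<in> A"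
          unfolding pld_arcs_def by auto
        have "snd b = k" using phin[OF e(3)] e by auto
        then have "k \<in> K" using b by (cases b) auto
        moreover have "j \<in> K" using a e(1) by auto
        ultimately show False using ind e(3) by blast
      qed
    next
      fix p assume p: "p \<in> out_cut (pld_arcs A A' \<phi>) {(x, y). (x, y) \<in> A' \<and> y \<in> K}"
      obtain a b where ab: "p = (a,b)" by (cases p)
      from p ab obtain i j k where e: "a = (i,j)" "b = \<phi> (j,k)" "(j,k) \<in> A" "(i,j) \<in> A'" "j \<in> K"
        unfolding out_cut_def pld_arcs_def by auto
      have bk: "b \<in> A'" "snd b = k" using phin[OF e(3)] e by auto
      have bnot: "b \<notin> {(x, y). (x, y) \<in> A' \<and> y \<in> K}" using p ab unfolding out_cut_def by auto
      have "k \<notin> K" using ind e by auto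
      then obtain s' where s': "(k,s') \<in> A" "s' \<in> K" using abs e by blast
      obtain x where bx: "b = (x,k)" using bk by (cases b) auto
      have xk: "(x,k) \<in> A'" using bx bk by simp
      have "((x,k), \<phi> (k,s')) \<in> pld_arcs A A' \<phi>" unfolding pld_arcs_def using xk s'(1) by blast
      then have "(b, \<phi> (k,s')) \<in> pld_arcs A A' \<phi>" using bx by simp
      moreover have "\<phi> (k,s') \<in> {(x, y). (x, y) \<in> A' \<and> y \<in> K}"
        using phin[OF s'(1)] s' by (cases "\<phi> (k,s')") auto
      ultimately show "case p of (s, x) \<Rightarrow> \<exists>s'. (x, s') \<in> in_cut (pld_arcs A A' \<phi>) {(x, y). (x, y) \<in> A' \<and> y \<in> K}"
        using ab bnot unfolding in_cut_def by auto
    qed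
  qed
  have P2: "inj_on (\<lambda>K. in_cut A K \<inter> A') {K. semikernel V A K}"
  proof (rule inj_onI)
    have key: "K = heads (in_cut A K \<inter> A')" if sk: "semikernel V A K" for K
    proof -
      have S: "in_cut A K \<inter> A' = {(x,y)\<in>A'. y \<in> K}" using sk_in_cut[OF sk A'A] .
      have "K \<subseteq> V" using sk unfolding semikernel_def independent_def by auto
      then show ?thesis using hd unfolding S heads_def by auto
    qed
    fix K L assume k: "K \<in> {K. semikernel V A K}" and l: "L \<in> {K. semikernel V A K}"
      and e: "in_cut A K \<inter> A' = in_cut A L \<inter> A'"
    have "K = heads (in_cut A K \<inter> A')" using key k by simp
    also have "\<dots> = heads (in_cut A L \<inter> A')" using e by simp
    also have "\<dots> = L" using key l by simp
    finally show "K = L" .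
  qed
  have fA': "finite A'" using A'A AV fV by (meson finite_SigmaI finite_subset)
  have "card {K. semikernel V A K} \<le> card {S. semikernel A' (pld_arcs A A' \<phi>) S}"
  proof (rule card_inj_on_le[OF P2])
    show "(\<lambda>K. in_cut A K \<inter> A') ` {K. semikernel V A K} \<subseteq> {S. semikernel A' (pld_arcs A A' \<phi>) S}"
      using P1 by auto
    show "finite {S. semikernel A' (pld_arcs A A' \<phi>) S}"
      by (rule finite_subset[of _ "Pow A'"]) (auto simp: semikernel_def independent_def fA')
  qed
  then show ?thesis using P1 P2 by blast
qed

end
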